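(* Let $n\ge 3$ be odd. Then $K^*_n$ has a rotationally symmetric (r.s.) nomadic near-Hamiltonian decomposition: there is a partition of the arc set of $K^*_n$ (with vertex set $\mathbb{Z}_n$) into $n$ directed cycles $C_1,\dots,C_n$, each of length $n-1$, together with a choice of root vertex $v_i$ on each $C_i$, such that, writing $g_i(t)=v_i^{+t}$ for the position of the nomad on $C_i$ at time $t$, for every pair $i\neq j$ there is a constant $c_{ij}\not\equiv 0 \pmod n$ with $g_i(t)-g_j(t)\equiv c_{ij}\pmod n$ for all integers $t\ge 0$. In particular $v_i^{+t}\neq v_j^{+t}$ for all $i\ne j$ and all $t\ge 0$. *)

theory Defs
  imports "HOL-Number_Theory.Cong"
begin

text \<open>Vertices of K*_n are 0..n-1, representing Z_n. Arcs: all ordered pairs of distinct vertices.\<close>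
definition Kstar_arcs :: "nat \<Rightarrow> (nat \<times> nat) set" where
  "Kstar_arcs n = {(u, v). u < n \<and> v < n \<and> u \<noteq> v}"

text \<open>A directed cycle of length m in K*_n, given by its vertex sequence s 0, ..., s (m-1)
  starting at its root vertex s 0 (arcs s k -> s (k+1 mod m)).\<close>
definition is_dicycle :: "nat \<Rightarrow> nat \<Rightarrow> (nat \<Rightarrow> nat) \<Rightarrow> bool" where
  "is_dicycle n m s \<longleftrightarrow> m \<ge> 2 \<and> inj_on s {..<m} \<and> s ` {..<m} \<subseteq> {..<n}"

definition cycle_arcs :: "nat \<Rightarrow> (nat \<Rightarrow> nat) \<Rightarrow> (nat \<times> nat) set" where
  "cycle_arcs m s = {(s k, s ((k + 1) mod m)) | k. k < m}"

text \<open>Position v^{+t} of the nomad at time t: t steps along the cycle from the root s 0.\<close>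
definition nomad_pos :: "nat \<Rightarrow> (nat \<Rightarrow> nat) \<Rightarrow> nat \<Rightarrow> nat" where
  "nomad_pos m s t = s (t mod m)"

end

theory Submission
  imports Defs
begin


definition bb :: "nat \<Rightarrow> nat" where "bb m = (m - 1) div 2"
definition aa :: "nat \<Rightarrow> nat \<Rightarrow> nat" where
  "aa m k = (if k = m-1 then (if m = 1 then 2 else if odd m then m-1 else m+1) else if k = bb m then 1 else 2*k+3)"
definition ee :: "nat \<Rightarrow> nat \<Rightarrow> int" where
  "ee m k = (if k \<le> bb m then (-1)^k else (-1)^(k+1))"
definition SS :: "nat \<Rightarrow> nat \<Rightarrow> int" where
  "SS m k = (if k < m then ee m k * int (k+1) else - (ee m (k-m) * int (k-m+1)))"
definition DD :: "nat \<Rightarrow> nat \<Rightarrow> int" where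
  "DD m k = SS m (Suc k mod (2*m)) - SS m k"

lemma small_dvd: fixes n z :: int assumes "n dvd z" "\<bar>z\<bar> < n" shows "z = 0"
proof (rule ccontr)
  assume "z \<noteq> 0"
  then have "\<bar>n\<bar> \<le> \<bar>z\<bar>" using dvd_imp_le_int assms(1) by blast
  then show False using assms(2) by linarith
qed

lemma ee_pm: "ee m k = 1 \<or> ee m k = -1"
  unfolding ee_def by (auto simp: minus_one_power_iff)

lemma SS_abs: assumes "k < 2*m" shows "\<bar>SS m k\<bar> = int (k mod m + 1)"
proof (cases "k < m")
  case True
  then show ?thesis using ee_pm[of m k] by (auto simp: SS_def abs_mult)
next
  case False
  then have "k mod m = k - m" using assms by (simp add: le_mod_geq)
  then show ?thesis using False ee_pm[of m "k-m"] by (auto simp: SS_def abs_mult)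
qed

lemma SS_neg: assumes "k < m" shows "SS m (k+m) = - SS m k"
  using assms by (simp add: SS_def)

lemma mod_half: fixes k m :: nat assumes "k < 2*m" "\<not> k < m" shows "k mod m = k - m"
proof -
  have "k - m < m" using assms by linarith
  then have "(k - m) mod m = k - m" by simp
  moreover have "k mod m = (k - m) mod m" using assms by (simp add: le_mod_geq)
  ultimately show ?thesis by simp
qed

lemma SS_inj: assumes "k < 2*m" "k' < 2*m" "[SS m k = SS m k'] (mod int (2*m+1))"
  shows "k = k'"
proof -
  have m0: "0 < m" using assms by auto
  have i1: "int (k mod m) < int m" "int (k' mod m) < int m" using m0 by auto
  have i2: "\<bar>SS m k\<bar> = int (k mod m) + 1" "\<bar>SS m k'\<bar> = int (k' mod m) + 1"
    using SS_abs[OF assms(1)] SS_abs[OF assms(2)] by auto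
  have a1: "\<bar>SS m k\<bar> \<le> int m" "\<bar>SS m k'\<bar> \<le> int m"
    using i1 i2 by linarith+
  have "int (2*m+1) dvd (SS m k - SS m k')" using assms(3) by (simp add: cong_iff_dvd_diff)
  with a1 have eq: "SS m k = SS m k'" using small_dvd[of "int (2*m+1)" "SS m k - SS m k'"] by linarith
  then have "k mod m = k' mod m" using SS_abs[OF assms(1)] SS_abs[OF assms(2)] by simp
  moreover have "SS m k \<noteq> 0" using SS_abs[OF assms(1)] by auto
  ultimately have md: "k mod m = k' mod m" and nz: "SS m k \<noteq> 0" by blast+
  show ?thesis
  proof (cases "k < m")
    case T1: True
    show ?thesis
    proof (cases "k' < m")
      case True
      then show ?thesis using T1 md by (metis mod_less)
    next
      case False
      then have "k' = k + m" using mod_half[OF assms(2) False] md T1 by simp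
      then show ?thesis using SS_neg[of k m] eq T1 nz by simp
    qed
  next
    case F1: False
    show ?thesis
    proof (cases "k' < m")
      case True
      then have "k = k' + m" using mod_half[OF assms(1) F1] md True F1 by simp
      then show ?thesis using SS_neg[of k' m] eq True nz by simp
    next
      case False
      then show ?thesis using mod_half[OF assms(1) F1] mod_half[OF assms(2) False] md F1 False by linarith
    qed
  qed
qed

lemma ee_0: "ee m 0 = 1" by (simp add: ee_def)

lemma DD_val: assumes "k < m" shows "DD m k = int (aa m k) \<or> DD m k = - int (aa m k)"
proof (cases "k = m - 1")
  case True
  then have km: "Suc k = m" using assms by auto
  then have "Suc k mod (2*m) = m" by auto
  then have D: "DD m k = -1 - ee m k * int m"
    using assms km by (simp add: DD_def SS_def ee_0)
  show ?thesis
  proof (cases "m = 1")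
    case True
    then have "k = 0" using km by simp
    then show ?thesis using D True by (simp add: ee_0 aa_def)
  next
    case False
    then have "bb m < k" using km unfolding bb_def by auto
    then have e: "ee m k = (-1)^m" using km unfolding ee_def by auto
    show ?thesis
    proof (cases "odd m")
      case True
      then have "ee m k = -1" using e by simp
      moreover have "aa m k = m - 1" using True False \<open>k = m - 1\<close> by (simp add: aa_def)
      ultimately show ?thesis using D km by simp
    next
      case F2: False
      then have "ee m k = 1" using e by simp
      moreover have "aa m k = m + 1" using F2 False \<open>k = m - 1\<close> by (simp add: aa_def)
      ultimately show ?thesis using D km by simp
    qed
  qed
next
  case False
  then have k1: "Suc k < m" using assms by auto
  then have "Suc k mod (2*m) = Suc k" by auto
  then have D: "DD m k = ee m (Suc k) * (int k + 2) - ee m k * (int k + 1)"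
    using k1 assms by (simp add: DD_def SS_def algebra_simps)
  define p :: int where "p = (-1)^k"
  have hp: "p = 1 \<or> p = -1" unfolding p_def by (simp add: minus_one_power_iff)
  have ps: "(-1::int)^(Suc k) = - p" "(-1::int)^(Suc (Suc k)) = p" unfolding p_def by simp_all
  consider (lt) "k < bb m" | (eq) "k = bb m" | (gt) "bb m < k" by linarith
  then show ?thesis
  proof cases
    case lt
    then have "ee m k = p" "ee m (Suc k) = - p" using ps unfolding ee_def by (simp_all add: p_def)
    then have "DD m k = - (p * int (2*k+3))" using D by (simp add: algebra_simps)
    moreover have "aa m k = 2*k+3" using lt False by (simp add: aa_def)
    ultimately show ?thesis using hp by auto
  next
    case eq
    then have "ee m k = p" "ee m (Suc k) = p" using ps unfolding ee_def by (simp_all add: p_def)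
    then have "DD m k = p" using D by (simp add: algebra_simps)
    moreover have "aa m k = 1" using eq False by (simp add: aa_def)
    ultimately show ?thesis using hp by auto
  next
    case gt
    then have "ee m k = - p" "ee m (Suc k) = p" using ps unfolding ee_def by (simp_all add: p_def)
    then have "DD m k = p * int (2*k+3)" using D by (simp add: algebra_simps)
    moreover have "aa m k = 2*k+3" using gt False by (simp add: aa_def)
    ultimately show ?thesis using hp by auto
  qed
qed

lemma DD_neg: assumes "k < m" shows "DD m (k+m) = - DD m k"
proof (cases "k = m - 1")
  case True
  then have km: "Suc k = m" using assms by auto
  then have e2: "Suc (k+m) = 2*m" by simp
  have a: "Suc (k+m) mod (2*m) = 0" unfolding e2 by simp
  have b: "Suc k mod (2*m) = m" using km by auto
  have "SS m m = - SS m 0" using SS_neg[of 0 m] assms by simp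
  then show ?thesis using a b SS_neg[OF assms] unfolding DD_def by simp
next
  case False
  then have k1: "Suc k < m" using assms by auto
  then have a: "Suc (k+m) mod (2*m) = Suc k + m" by simp
  have b: "Suc k mod (2*m) = Suc k" using k1 by auto
  show ?thesis using a b SS_neg[OF assms] SS_neg[OF k1] unfolding DD_def by simp
qed

lemma DD_gen: assumes "k < 2*m" shows "DD m k = int (aa m (k mod m)) \<or> DD m k = - int (aa m (k mod m))"
proof (cases "k < m")
  case True
  then show ?thesis using DD_val[OF True] by simp
next
  case False
  have h: "k mod m = k - m" using mod_half[OF assms False] .
  have k0: "k - m < m" using assms False by linarith
  have kk: "(k - m) + m = k" using False by simp
  have "DD m ((k - m) + m) = - DD m (k - m)" by (rule DD_neg[OF k0])
  then have "DD m k = - DD m (k - m)" unfolding kk .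
  then show ?thesis using DD_val[OF k0] h by auto
qed

lemma aa_bounds: assumes "k < m" shows "0 < aa m k \<and> aa m k \<le> 2*m"
  using assms unfolding aa_def by auto
lemma aa_inj: assumes "k < m" "k' < m" "k \<noteq> k'" shows "aa m k \<noteq> aa m k' \<and> aa m k + aa m k' \<noteq> 2*m+1"
proof -
  define r where "r = m div 2"
  have r: "m = 2*r \<or> m = 2*r+1" unfolding r_def by arith
  then show ?thesis
  proof
    assume h: "m = 2*r"
    then have "bb m = r - 1" unfolding bb_def by (cases r) auto
    with h assms show ?thesis unfolding aa_def apply auto
      apply (drule arg_cong[where f=even], simp)+
      done
  next
    assume h: "m = 2*r+1"
    then have "bb m = r" unfolding bb_def by auto
    with h assms show ?thesis unfolding aa_def apply auto
      apply (drule arg_cong[where f=even], simp)+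
      done
  qed
qed

lemma DD_opp: assumes "k < 2*m" "k' < 2*m" "k mod m = k' mod m" "k \<noteq> k'"
  shows "DD m k' = - DD m k"
proof (cases "k < m")
  case True
  then have "\<not> k' < m" using assms by (metis mod_less)
  then have "k' = k + m" using mod_half[OF assms(2)] assms(3) True by simp
  then show ?thesis using DD_neg[OF True] by simp
next
  case False
  have kk: "k' < m"
  proof (rule ccontr)
    assume a: "\<not> k' < m"
    then have "k - m = k' - m" using mod_half[OF assms(1) False] mod_half[OF assms(2) a] assms(3) by simp
    then show False using assms(4) False a by linarith
  qed
  then have "k = k' + m" using mod_half[OF assms(1) False] assms(3) False by simp
  then show ?thesis using DD_neg[OF kk] by simp
qed

lemma DD_inj: assumes "k < 2*m" "k' < 2*m" "[DD m k = DD m k'] (mod int (2*m+1))"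
  shows "k = k'"
proof -
  have m0: "0 < m" using assms by auto
  define k0 where "k0 = k mod m"
  define k1 where "k1 = k' mod m"
  have k0m: "k0 < m" "k1 < m" using m0 unfolding k0_def k1_def by auto
  define x where "x = int (aa m k0)"
  define y where "y = int (aa m k1)"
  have bx: "0 < x" "x \<le> 2*int m" "0 < y" "y \<le> 2*int m"
    using aa_bounds[OF k0m(1)] aa_bounds[OF k0m(2)] unfolding x_def y_def by auto
  have dv: "int (2*m+1) dvd (DD m k - DD m k')" using assms(3) by (simp add: cong_iff_dvd_diff)
  have g1: "DD m k = x \<or> DD m k = - x" using DD_gen[OF assms(1)] unfolding x_def k0_def .
  have g2: "DD m k' = y \<or> DD m k' = - y" using DD_gen[OF assms(2)] unfolding y_def k1_def .
  have noplus: "\<not> int (2*m+1) dvd (x + y)"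
  proof
    assume h: "int (2*m+1) dvd (x + y)"
    have "int (2*m+1) dvd (x + y - int (2*m+1))" using h by (simp add: dvd_diff)
    moreover have "\<bar>x + y - int (2*m+1)\<bar> < int (2*m+1)" using bx by auto
    ultimately have "x + y - int (2*m+1) = 0" by (rule small_dvd)
    then have s: "aa m k0 + aa m k1 = 2*m+1" unfolding x_def y_def by linarith
    show False
    proof (cases "k0 = k1")
      case True
      then have "2 * aa m k0 = 2*m+1" using s by simp
      then show False by presburger
    next
      case False
      then show False using aa_inj[OF k0m False] s by simp
    qed
  qed
  have same: "(DD m k = x \<and> DD m k' = y) \<or> (DD m k = - x \<and> DD m k' = - y)"
  proof -
    have "\<not> (DD m k = x \<and> DD m k' = - y)"
    proof
      assume "DD m k = x \<and> DD m k' = - y"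
      then have "DD m k - DD m k' = x + y" by simp
      then show False using noplus dv by simp
    qed
    moreover have "\<not> (DD m k = - x \<and> DD m k' = y)"
    proof
      assume "DD m k = - x \<and> DD m k' = y"
      then have "int (2*m+1) dvd - (x + y)" using dv by (simp add: algebra_simps)
      then show False using noplus by (metis dvd_minus_iff)
    qed
    ultimately show ?thesis using g1 g2 by blast
  qed
  then have "DD m k - DD m k' = x - y \<or> DD m k - DD m k' = - (x - y)" by auto
  then have "int (2*m+1) dvd (x - y)" using dv by (metis dvd_minus_iff)
  moreover have "\<bar>x - y\<bar> < int (2*m+1)" using bx by auto
  ultimately have "x - y = 0" by (rule small_dvd)
  then have "aa m k0 = aa m k1" unfolding x_def y_def by simp
  then have k01: "k0 = k1" using aa_inj[OF k0m] by blast
  show ?thesis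
  proof (rule ccontr)
    assume "k \<noteq> k'"
    then have "DD m k' = - DD m k" using DD_opp[OF assms(1,2)] k01 unfolding k0_def k1_def by blast
    moreover have "x = y" using k01 unfolding x_def y_def by simp
    ultimately show False using same bx by auto
  qed
qed

lemma DD_nz: assumes "k < 2*m" shows "\<not> int (2*m+1) dvd DD m k"
proof
  assume h: "int (2*m+1) dvd DD m k"
  have m0: "0 < m" using assms by auto
  have km: "k mod m < m" using m0 by auto
  have "\<bar>DD m k\<bar> = int (aa m (k mod m))" using DD_gen[OF assms] by auto
  moreover have "0 < aa m (k mod m)" "aa m (k mod m) \<le> 2*m" using aa_bounds[OF km] by auto
  ultimately have "\<bar>DD m k\<bar> < int (2*m+1)" "DD m k \<noteq> 0" by auto
  then show False using small_dvd[OF h] by auto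
qed

lemma DD_surj: assumes "0 < r" "r < int (2*m+1)"
  shows "\<exists>k<2*m. [DD m k = r] (mod int (2*m+1))"
proof -
  define N where "N = int (2*m+1)"
  define f where "f k = DD m k mod N" for k
  have inj: "inj_on f {..<2*m}"
  proof (rule inj_onI)
    fix k k' assume "k \<in> {..<2*m}" "k' \<in> {..<2*m}" "f k = f k'"
    then show "k = k'" using DD_inj[of k m k'] unfolding f_def N_def cong_def by auto
  qed
  have sub: "f ` {..<2*m} \<subseteq> {1..N-1}"
  proof
    fix z assume "z \<in> f ` {..<2*m}"
    then obtain k where k: "k < 2*m" "z = f k" by auto
    have N0: "0 < N" unfolding N_def by simp
    have "z \<noteq> 0" using DD_nz[OF k(1)] k(2) unfolding f_def N_def by (simp add: dvd_eq_mod_eq_0)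
    moreover have "0 \<le> z" "z < N" using k(2) N0 unfolding f_def by auto
    ultimately show "z \<in> {1..N-1}" by auto
  qed
  have c1: "card (f ` {..<2*m}) = 2*m" using card_image[OF inj] by simp
  have c2: "card {1..N-1} = 2*m" unfolding N_def by simp
  have eq: "f ` {..<2*m} = {1..N-1}"
    using card_subset_eq[OF _ sub] c1 c2 by simp
  have "r \<in> {1..N-1}" using assms unfolding N_def by auto
  then obtain k where k: "k < 2*m" "f k = r" using eq by (metis imageE lessThan_iff)
  have "r mod N = r" using assms unfolding N_def by simp
  then have "[DD m k = r] (mod N)" using k(2) unfolding f_def cong_def by simp
  then show ?thesis using k(1) unfolding N_def by blast
qed

definition Cyc :: "nat \<Rightarrow> nat \<Rightarrow> nat \<Rightarrow> nat" where
  "Cyc m i k = nat ((SS m k + int i) mod int (2*m+1))"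

lemma Cyc_int: "int (Cyc m i k) = (SS m k + int i) mod int (2*m+1)"
  unfolding Cyc_def by simp

lemma Cyc_cong: "[int (Cyc m i k) = SS m k + int i] (mod int (2*m+1))"
  unfolding Cyc_int by simp

lemma Cyc_lt: "Cyc m i k < 2*m+1"
proof -
  have "int (Cyc m i k) < int (2*m+1)" unfolding Cyc_int by simp
  then show ?thesis by linarith
qed

lemma uniq_cong: fixes a b N :: int assumes "0 \<le> a" "a < N" "0 \<le> b" "b < N" "[a = b] (mod N)"
  shows "a = b"
  using assms by (metis cong_def mod_pos_pos_trivial)

lemma uniq_nat: assumes "i < 2*m+1" "j < 2*m+1" "[int i = int j] (mod int (2*m+1))" shows "i = j"
proof -
  have "int i = int j" by (rule uniq_cong[OF _ _ _ _ assms(3)]) (use assms(1,2) in auto)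
  then show ?thesis by simp
qed

lemma Cyc_step: assumes "k < 2*m"
  shows "[int (Cyc m i ((k+1) mod (2*m))) - int (Cyc m i k) = DD m k] (mod int (2*m+1))"
proof -
  have "[int (Cyc m i ((k+1) mod (2*m))) - int (Cyc m i k) = (SS m ((k+1) mod (2*m)) + int i) - (SS m k + int i)] (mod int (2*m+1))"
    by (rule cong_diff[OF Cyc_cong Cyc_cong])
  moreover have "(SS m ((k+1) mod (2*m)) + int i) - (SS m k + int i) = DD m k"
    unfolding DD_def by simp
  ultimately show ?thesis by simp
qed

lemma Cyc_inj: assumes "k < 2*m" "k' < 2*m" "Cyc m i k = Cyc m i k'" shows "k = k'"
proof -
  have "[SS m k + int i = SS m k' + int i] (mod int (2*m+1))"
    using Cyc_cong[of m i k] Cyc_cong[of m i k'] assms(3) by (metis cong_sym cong_trans)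
  then have "[SS m k = SS m k'] (mod int (2*m+1))" by (simp add: cong_add_rcancel)
  then show ?thesis using SS_inj assms by blast
qed

lemma Cyc_diff: "[int (Cyc m i k) - int (Cyc m j k) = int i - int j] (mod int (2*m+1))"
proof -
  have "[int (Cyc m i k) - int (Cyc m j k) = (SS m k + int i) - (SS m k + int j)] (mod int (2*m+1))"
    by (rule cong_diff[OF Cyc_cong Cyc_cong])
  then show ?thesis by simp
qed

lemma ij_ne: assumes "i < 2*m+1" "j < 2*m+1" "i \<noteq> j" shows "\<not> [int i - int j = 0] (mod int (2*m+1))"
proof
  assume "[int i - int j = 0] (mod int (2*m+1))"
  then have "[int i = int j] (mod int (2*m+1))" by (simp only: cong_diff_iff_cong_0)
  then show False using uniq_nat[OF assms(1,2)] assms(3) by blast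
qed

lemma Cyc_ne: assumes "i < 2*m+1" "j < 2*m+1" "i \<noteq> j" shows "Cyc m i k \<noteq> Cyc m j k"
proof
  assume "Cyc m i k = Cyc m j k"
  then have "[int i - int j = 0] (mod int (2*m+1))"
    using Cyc_diff[of m i k j] by (simp add: cong_sym_eq)
  then show False using ij_ne[OF assms] by simp
qed

lemma main_m: assumes "1 \<le> m"
  shows "\<exists>C :: nat \<Rightarrow> nat \<Rightarrow> nat.
     (\<forall>i<2*m+1. is_dicycle (2*m+1) ((2*m+1) - 1) (C i)) \<and>
     (\<forall>i<2*m+1. \<forall>j<2*m+1. i \<noteq> j \<longrightarrow> cycle_arcs ((2*m+1) - 1) (C i) \<inter> cycle_arcs ((2*m+1) - 1) (C j) = {}) \<and>
     (\<Union>i<2*m+1. cycle_arcs ((2*m+1) - 1) (C i)) = Kstar_arcs (2*m+1) \<and>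
     (\<forall>i<2*m+1. \<forall>j<2*m+1. i \<noteq> j \<longrightarrow>
        (\<exists>c :: int. \<not> [c = 0] (mod int (2*m+1)) \<and>
           (\<forall>t :: nat. [int (nomad_pos ((2*m+1) - 1) (C i) t) - int (nomad_pos ((2*m+1) - 1) (C j) t) = c] (mod int (2*m+1))))) \<and>
     (\<forall>i<2*m+1. \<forall>j<2*m+1. i \<noteq> j \<longrightarrow> (\<forall>t :: nat. nomad_pos ((2*m+1) - 1) (C i) t \<noteq> nomad_pos ((2*m+1) - 1) (C j) t))"

proof -
  have nm: "(2*m+1) - 1 = 2*m" by simp
  have P1: "\<forall>i<2*m+1. is_dicycle (2*m+1) (2*m) (Cyc m i)"
    unfolding is_dicycle_def using Cyc_inj Cyc_lt assms by (auto simp: inj_on_def)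
  have P2: "\<forall>i<2*m+1. \<forall>j<2*m+1. i \<noteq> j \<longrightarrow> cycle_arcs (2*m) (Cyc m i) \<inter> cycle_arcs (2*m) (Cyc m j) = {}"
  proof (intro allI impI)
    fix i j assume ij: "i < 2*m+1" "j < 2*m+1" "i \<noteq> j"
    show "cycle_arcs (2*m) (Cyc m i) \<inter> cycle_arcs (2*m) (Cyc m j) = {}"
    proof (rule ccontr)
      assume "cycle_arcs (2*m) (Cyc m i) \<inter> cycle_arcs (2*m) (Cyc m j) \<noteq> {}"
      then obtain k k' where k: "k < 2*m" "k' < 2*m" "Cyc m i k = Cyc m j k'"
          "Cyc m i ((k+1) mod (2*m)) = Cyc m j ((k'+1) mod (2*m))"
        unfolding cycle_arcs_def by auto
      have "[DD m k = DD m k'] (mod int (2*m+1))"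
        using Cyc_step[OF k(1), of i] Cyc_step[OF k(2), of j] k(3,4) by (metis cong_sym cong_trans)
      then have "k = k'" using DD_inj k(1,2) by blast
      then show False using Cyc_ne[OF ij] k(3) by simp
    qed
  qed
  have P3: "(\<Union>i<2*m+1. cycle_arcs (2*m) (Cyc m i)) = Kstar_arcs (2*m+1)"
  proof
    show "(\<Union>i<2*m+1. cycle_arcs (2*m) (Cyc m i)) \<subseteq> Kstar_arcs (2*m+1)"
    proof
      fix a assume "a \<in> (\<Union>i<2*m+1. cycle_arcs (2*m) (Cyc m i))"
      then obtain i k where k: "k < 2*m" "a = (Cyc m i k, Cyc m i ((k+1) mod (2*m)))"
        unfolding cycle_arcs_def by auto
      have "Cyc m i k \<noteq> Cyc m i ((k+1) mod (2*m))"
      proof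
        assume e: "Cyc m i k = Cyc m i ((k+1) mod (2*m))"
        have "[0 = DD m k] (mod int (2*m+1))" using Cyc_step[OF k(1), of i] unfolding e by simp
        then have "int (2*m+1) dvd DD m k" by (metis cong_sym cong_0_iff)
        then show False using DD_nz[OF k(1)] by blast
      qed
      then show "a \<in> Kstar_arcs (2*m+1)" unfolding Kstar_arcs_def using k(2) Cyc_lt by auto
    qed
  next
    show "Kstar_arcs (2*m+1) \<subseteq> (\<Union>i<2*m+1. cycle_arcs (2*m) (Cyc m i))"
    proof
      fix a assume "a \<in> Kstar_arcs (2*m+1)"
      then obtain u v where uv: "a = (u, v)" "u < 2*m+1" "v < 2*m+1" "u \<noteq> v"
        unfolding Kstar_arcs_def by auto
      define N where "N = int (2*m+1)"
      define r where "r = (int v - int u) mod N"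
      have N0: "0 < N" unfolding N_def by simp
      have r0: "0 \<le> r" "r < N" unfolding r_def using N0 by auto
      have "r \<noteq> 0"
      proof
        assume "r = 0"
        then have "N dvd (int v - int u)" unfolding r_def by (simp add: dvd_eq_mod_eq_0)
        moreover have "\<bar>int v - int u\<bar> < N" using uv unfolding N_def by auto
        ultimately have "int v - int u = 0" by (rule small_dvd)
        then show False using uv(4) by simp
      qed
      then have "0 < r" using r0 by simp
      then obtain k where k: "k < 2*m" "[DD m k = r] (mod N)" using DD_surj[of r m] r0 unfolding N_def by auto
      define i where "i = nat ((int u - SS m k) mod N)"
      have i_int: "int i = (int u - SS m k) mod N" unfolding i_def using N0 by simp
      have i_lt: "i < 2*m+1"
      proof -
        have "int i < N" unfolding i_int using N0 by simp
        then show ?thesis unfolding N_def by linarith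
      qed
      have ic: "[int i = int u - SS m k] (mod N)" unfolding i_int by simp
      have "[int (Cyc m i k) = SS m k + int i] (mod N)" unfolding N_def by (rule Cyc_cong)
      also have "[SS m k + int i = SS m k + (int u - SS m k)] (mod N)" by (rule cong_add[OF cong_refl ic])
      finally have "[int (Cyc m i k) = int u] (mod N)" by simp
      then have cu: "Cyc m i k = u" using uniq_nat[OF Cyc_lt uv(2)] unfolding N_def by blast
      have "[int (Cyc m i ((k+1) mod (2*m))) - int u = DD m k] (mod N)"
        using Cyc_step[OF k(1), of i] cu unfolding N_def by simp
      also have "[DD m k = r] (mod N)" by (rule k(2))
      also have "[r = int v - int u] (mod N)" unfolding r_def by simp
      finally have "[int (Cyc m i ((k+1) mod (2*m))) - int u + int u = int v - int u + int u] (mod N)"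
        by (rule cong_add[OF _ cong_refl])
      then have "[int (Cyc m i ((k+1) mod (2*m))) = int v] (mod N)" by simp
      then have cv: "Cyc m i ((k+1) mod (2*m)) = v" using uniq_nat[OF Cyc_lt uv(3)] unfolding N_def by blast
      have "a \<in> cycle_arcs (2*m) (Cyc m i)" unfolding cycle_arcs_def uv(1) using k(1) cu cv by auto
      then show "a \<in> (\<Union>i<2*m+1. cycle_arcs (2*m) (Cyc m i))" using i_lt by auto
    qed
  qed
  have P4: "\<forall>i<2*m+1. \<forall>j<2*m+1. i \<noteq> j \<longrightarrow>
        (\<exists>c :: int. \<not> [c = 0] (mod int (2*m+1)) \<and>
           (\<forall>t :: nat. [int (nomad_pos (2*m) (Cyc m i) t) - int (nomad_pos (2*m) (Cyc m j) t) = c] (mod int (2*m+1))))"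
  proof (intro allI impI)
    fix i j assume ij: "i < 2*m+1" "j < 2*m+1" "i \<noteq> j"
    show "\<exists>c :: int. \<not> [c = 0] (mod int (2*m+1)) \<and>
           (\<forall>t :: nat. [int (nomad_pos (2*m) (Cyc m i) t) - int (nomad_pos (2*m) (Cyc m j) t) = c] (mod int (2*m+1)))"
      by (rule exI[of _ "int i - int j"]) (use ij_ne[OF ij] Cyc_diff in \<open>auto simp: nomad_pos_def\<close>)
  qed
  have P5: "\<forall>i<2*m+1. \<forall>j<2*m+1. i \<noteq> j \<longrightarrow> (\<forall>t :: nat. nomad_pos (2*m) (Cyc m i) t \<noteq> nomad_pos (2*m) (Cyc m j) t)"
    using Cyc_ne unfolding nomad_pos_def by blast
  show ?thesis unfolding nm
    by (rule exI[of _ "Cyc m"]) (use P1 P2 P3 P4 P5 in blast)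
qed


theorem theorem1:
  fixes n :: nat
  assumes "n \<ge> 3" and "odd n"
  shows "\<exists>C :: nat \<Rightarrow> nat \<Rightarrow> nat.
     (\<forall>i<n. is_dicycle n (n - 1) (C i)) \<and>
     (\<forall>i<n. \<forall>j<n. i \<noteq> j \<longrightarrow> cycle_arcs (n - 1) (C i) \<inter> cycle_arcs (n - 1) (C j) = {}) \<and>
     (\<Union>i<n. cycle_arcs (n - 1) (C i)) = Kstar_arcs n \<and>
     (\<forall>i<n. \<forall>j<n. i \<noteq> j \<longrightarrow>
        (\<exists>c :: int. \<not> [c = 0] (mod int n) \<and>
           (\<forall>t :: nat. [int (nomad_pos (n - 1) (C i) t) - int (nomad_pos (n - 1) (C j) t) = c] (mod int n)))) \<and>
     (\<forall>i<n. \<forall>j<n. i \<noteq> j \<longrightarrow> (\<forall>t :: nat. nomad_pos (n - 1) (C i) t \<noteq> nomad_pos (n - 1) (C j) t))"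
proof -
  define m where "m = n div 2"
  have n: "n = 2*m+1" using assms(2) unfolding m_def by (metis odd_two_times_div_two_succ)
  have m1: "1 \<le> m" using assms(1) n by linarith
  from main_m[OF m1] show ?thesis by (simp only: n)
qed

end
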